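(* Let $n\ge 1$ and $k\ge 0$ be integers, and let $C_n=\{v_0,\dots,v_{n-1}\}$ with metric $d(v_i,v_j)=\min\{|i-j|,n-|i-j|\}$. For indices taken modulo $n$, put $\sigma_i=\{v_i,v_{i+1},\dots,v_{i+k}\}$, $\sigma_i'=\{v_i,v_{i+k},v_{i+2k}\}$ and $\sigma_i''=\{v_i,v_{i+k},v_{i+2k-1},v_{i+2k}\}$. Then the set of maximal simplices of $\mathrm{VR}(C_n;k)$ is $\{\sigma_i: 0\le i\le n-1\}$ if $n>3k$; $\{\sigma_i: 0\le i\le n-1\}\cup\{\sigma_i': 0\le i\le n-1\}$ if $n=3k$ and $k\ge 2$; $\{\sigma_i: 0\le i\le n-1\}\cup\{\sigma_i'': 0\le i\le n-1\}$ if $n=3k-1$ and $k\ge 3$.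
   Context: $\mathrm{VR}(X;r)$ is the simplicial complex on vertex set $X$ whose simplices are the finite nonempty subsets of diameter at most $r$; a maximal simplex is one not properly contained in another simplex. *)

theory Defs
  imports Main
begin

text \<open>Cycle graph C_n: vertex v_i is represented by the natural number i < n.\<close>
definition cyc_vertices :: "nat \<Rightarrow> nat set" where
  "cyc_vertices n = {..<n}"

definition cyc_dist :: "nat \<Rightarrow> nat \<Rightarrow> nat \<Rightarrow> nat" where
  "cyc_dist n i j = (let d = (if i \<le> j then j - i else i - j) in min d (n - d))"

definition diam :: "('a \<Rightarrow> 'a \<Rightarrow> nat) \<Rightarrow> 'a set \<Rightarrow> nat" where
  "diam d S = Max {d x y | x y. x \<in> S \<and> y \<in> S}"

definition VR :: "'a set \<Rightarrow> ('a \<Rightarrow> 'a \<Rightarrow> nat) \<Rightarrow> nat \<Rightarrow> 'a set set" where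
  "VR X d r = {S. S \<subseteq> X \<and> finite S \<and> S \<noteq> {} \<and> diam d S \<le> r}"

definition maximal_simplices :: "'a set set \<Rightarrow> 'a set set" where
  "maximal_simplices K = {S \<in> K. \<forall>T \<in> K. S \<subseteq> T \<longrightarrow> T = S}"

definition sigma :: "nat \<Rightarrow> nat \<Rightarrow> nat \<Rightarrow> nat set" where
  "sigma n k i = {(i + j) mod n | j. j \<le> k}"

definition sigma' :: "nat \<Rightarrow> nat \<Rightarrow> nat \<Rightarrow> nat set" where
  "sigma' n k i = {i mod n, (i + k) mod n, (i + 2*k) mod n}"

definition sigma'' :: "nat \<Rightarrow> nat \<Rightarrow> nat \<Rightarrow> nat set" where
  "sigma'' n k i = {i mod n, (i + k) mod n, (i + 2*k - 1) mod n, (i + 2*k) mod n}"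

end

theory Submission
  imports Defs
begin

definition cl :: "nat \<Rightarrow> nat \<Rightarrow> nat set \<Rightarrow> bool" where
  "cl n k S \<longleftrightarrow> S \<subseteq> {..<n} \<and> S \<noteq> {} \<and> (\<forall>x\<in>S. \<forall>y\<in>S. cyc_dist n x y \<le> k)"

lemma VR_cl: "S \<in> VR (cyc_vertices n) (cyc_dist n) k \<longleftrightarrow> cl n k S"
proof -
  have fin: "finite {cyc_dist n x y | x y. x \<in> S \<and> y \<in> S}" if "finite S"
  proof -
    have "{cyc_dist n x y | x y. x \<in> S \<and> y \<in> S} = (\<lambda>(x,y). cyc_dist n x y) ` (S \<times> S)" by auto
    thus ?thesis using that by simp
  qed
  have "diam (cyc_dist n) S \<le> k \<longleftrightarrow> (\<forall>x\<in>S. \<forall>y\<in>S. cyc_dist n x y \<le> k)" if "finite S" "S \<noteq> {}"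
    unfolding diam_def using fin[OF that(1)] that(2) by (subst Max_le_iff) auto
  moreover have "S \<subseteq> {..<n} \<Longrightarrow> finite S" using finite_subset by blast
  ultimately show ?thesis unfolding VR_def cl_def cyc_vertices_def by auto
qed

lemma cd: "cyc_dist n x y = (if x \<le> y then min (y-x) (n-(y-x)) else min (x-y) (n-(x-y)))"
  unfolding cyc_dist_def Let_def by auto

lemma rot1:
  assumes "x < n" "y < n"
  shows "cyc_dist n ((x+1) mod n) ((y+1) mod n) = cyc_dist n x y"
proof -
  have e1: "(x+1) mod n = (if x+1 = n then 0 else x+1)" using assms by (simp add: mod_if)
  have e2: "(y+1) mod n = (if y+1 = n then 0 else y+1)" using assms by (simp add: mod_if)
  show ?thesis
  proof (cases "x+1 = n")
    case True
    show ?thesis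
    proof (cases "y + 1 = n")
      case False
      hence "y < x" "n - (y+1) = x - y" "n - (x - y) = y + 1" using True assms by auto
      thus ?thesis unfolding e1 e2 cd using True False by (simp add: min.commute)
    next
      case True
      hence "x = y" using \<open>x+1 = n\<close> by simp
      thus ?thesis by (simp add: cd)
    qed
  next
    case False
    show ?thesis
    proof (cases "y + 1 = n")
      case True
      hence "x < y" "n - (x+1) = y - x" "n - (y - x) = x + 1" using False assms by auto
      thus ?thesis unfolding e1 e2 cd using True False by (simp add: min.commute)
    next
      case f2: False
      show ?thesis unfolding e1 e2 cd using False f2 by simp
    qed
  qed
qed

lemma rot_dist:
  assumes "x < n" "y < n"
  shows "cyc_dist n ((x+t) mod n) ((y+t) mod n) = cyc_dist n x y"
proof (induction t)
  case (Suc t)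
  have "(x + Suc t) mod n = ((x+t) mod n + 1) mod n" "(y + Suc t) mod n = ((y+t) mod n + 1) mod n"
    by (simp_all add: mod_Suc_eq)
  moreover have "(x+t) mod n < n" "(y+t) mod n < n" using assms by simp_all
  ultimately show ?case using rot1 Suc by simp
qed (use assms in simp)

lemma rot_inv:
  fixes x a b n :: nat
  assumes "x < n" "(a + b) mod n = 0"
  shows "((x+a) mod n + b) mod n = x"
proof -
  have "((x+a) mod n + b) mod n = (x + a + b) mod n" by (rule mod_add_left_eq)
  also have "\<dots> = (x + (a + b) mod n) mod n" by (simp only: mod_add_right_eq add.assoc)
  also have "\<dots> = x" using assms by simp
  finally show ?thesis .
qed

lemma inv_amount: "n > 0 \<Longrightarrow> (t + (n - t mod n)) mod n = (0::nat)"
proof -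
  assume "n > 0"
  hence False: "n \<noteq> 0" by simp
  have le: "t mod n \<le> t" "t mod n < n" using False by simp_all
  have "t + (n - t mod n) = n + (t - t mod n)" using le by simp
  also have "t - t mod n = n * (t div n)" by (simp add: minus_mod_eq_mult_div)
  finally have "t + (n - t mod n) = n * (t div n + 1)" by simp
  thus ?thesis by simp
qed

definition rot :: "nat \<Rightarrow> nat \<Rightarrow> nat \<Rightarrow> nat" where "rot n t x = (x + t) mod n"

definition ismax :: "nat \<Rightarrow> nat \<Rightarrow> nat set \<Rightarrow> bool" where
  "ismax n k L \<longleftrightarrow> cl n k L \<and> (\<forall>T. cl n k T \<and> L \<subseteq> T \<longrightarrow> T = L)"

lemma maxsimp: "maximal_simplices (VR (cyc_vertices n) (cyc_dist n) k) = {L. ismax n k L}"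
proof -
  have "VR (cyc_vertices n) (cyc_dist n) k = {S. cl n k S}" using VR_cl by auto
  thus ?thesis unfolding maximal_simplices_def ismax_def by auto
qed

lemma cdle: "x < n \<Longrightarrow> y < n \<Longrightarrow> cyc_dist n x y \<le> k \<longleftrightarrow>
   (x \<le> y \<and> (y - x \<le> k \<or> n + x \<le> y + k)) \<or> (y < x \<and> (x - y \<le> k \<or> n + y \<le> x + k))"
  unfolding cd by auto

lemma dle: "cyc_dist n x y \<le> k \<Longrightarrow> x < n \<Longrightarrow> y < n \<Longrightarrow>
   (x \<le> y \<and> (y - x \<le> k \<or> n + x \<le> y + k)) \<or> (y < x \<and> (x - y \<le> k \<or> n + y \<le> x + k))"
  using cdle by blast

lemma dle2: "cyc_dist n x y \<le> k \<Longrightarrow> x < n \<Longrightarrow> y < n \<Longrightarrow>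
   (y \<le> x + k \<and> x \<le> y + k) \<or> n + x \<le> y + k \<or> n + y \<le> x + k"
  unfolding cd by (cases "x \<le> y") (auto simp: min_def split: if_splits)

lemma dist_le_intro: "x < n \<Longrightarrow> y < n \<Longrightarrow>
   (y \<le> x + k \<and> x \<le> y + k) \<or> n + x \<le> y + k \<or> n + y \<le> x + k \<Longrightarrow> cyc_dist n x y \<le> k"
  unfolding cd by (auto simp: min_def)

lemma cl_le2: "cl n k S \<Longrightarrow> x \<in> S \<Longrightarrow> y \<in> S \<Longrightarrow>
   (y \<le> x + k \<and> x \<le> y + k) \<or> n + x \<le> y + k \<or> n + y \<le> x + k"
  using dle2[of n x y k] unfolding cl_def by auto

lemma cl_rot: assumes "cl n k S" shows "cl n k (rot n t ` S)"
proof -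
  have "n > 0" using assms unfolding cl_def by auto
  have "\<forall>x\<in>S. \<forall>y\<in>S. cyc_dist n ((x+t) mod n) ((y+t) mod n) \<le> k"
  proof (intro ballI)
    fix x y assume "x \<in> S" "y \<in> S"
    moreover hence "x < n" "y < n" using assms cl_def by auto
    ultimately show "cyc_dist n ((x+t) mod n) ((y+t) mod n) \<le> k" using rot_dist assms cl_def by metis
  qed
  thus ?thesis using assms \<open>n > 0\<close> unfolding cl_def rot_def by auto
qed

lemma rot_rot: "x < n \<Longrightarrow> (a + b) mod n = 0 \<Longrightarrow> rot n b (rot n a x) = x"
  unfolding rot_def by (rule rot_inv)

lemma rot_rot_img:
  assumes "S \<subseteq> {..<n}" "(a + b) mod n = 0"
  shows "rot n b ` rot n a ` S = S"
proof -
  have eq: "\<forall>x\<in>S. rot n b (rot n a x) = x"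
  proof
    fix x assume "x \<in> S"
    hence "x < n" using assms(1) by auto
    thus "rot n b (rot n a x) = x" using rot_rot assms(2) by simp
  qed
  show ?thesis
  proof
    show "rot n b ` rot n a ` S \<subseteq> S" using eq by auto
    show "S \<subseteq> rot n b ` rot n a ` S"
    proof
      fix x assume x: "x \<in> S"
      hence "x = rot n b (rot n a x)" using eq by simp
      thus "x \<in> rot n b ` rot n a ` S" using x by blast
    qed
  qed
qed

lemma ismax_rot: assumes "ismax n k L" shows "ismax n k (rot n t ` L)"
proof -
  have clL: "cl n k L" using assms ismax_def by auto
  have Ln: "L \<subseteq> {..<n}" using clL cl_def by auto
  have n0: "n > 0" using clL cl_def by auto
  have "T = rot n t ` L" if T: "cl n k T" "rot n t ` L \<subseteq> T" for T
  proof -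
    define s where "s = n - t mod n"
    have Tn: "T \<subseteq> {..<n}" using T cl_def by auto
    have "cl n k (rot n s ` T)" using T cl_rot by blast
    moreover have "L \<subseteq> rot n s ` T"
    proof -
      have "rot n s ` rot n t ` L \<subseteq> rot n s ` T" using T by blast
      thus ?thesis using rot_rot_img[OF Ln inv_amount[OF n0, of t]] s_def by simp
    qed
    ultimately have "rot n s ` T = L" using assms ismax_def by auto
    hence "rot n t ` rot n s ` T = rot n t ` L" by simp
    moreover have "(s + t) mod n = 0" using inv_amount[OF n0, of t] s_def by (simp add: add.commute)
    ultimately show ?thesis using rot_rot_img[OF Tn] by simp
  qed
  thus ?thesis using cl_rot[OF clL] ismax_def by auto
qed

lemma assemble:
  assumes F: "\<forall>L\<in>F. ismax n k L" "\<forall>L\<in>F. \<forall>t. rot n t ` L \<in> F"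
    and cov: "\<And>S. cl n k S \<Longrightarrow> 0 \<in> S \<Longrightarrow> \<exists>L\<in>F. S \<subseteq> L"
  shows "{L. ismax n k L} = F"
proof
  show "F \<subseteq> {L. ismax n k L}" using F by auto
  show "{L. ismax n k L} \<subseteq> F"
  proof
    fix S assume "S \<in> {L. ismax n k L}"
    hence S: "ismax n k S" by simp
    hence clS: "cl n k S" and Sn: "S \<subseteq> {..<n}" using ismax_def cl_def by auto
    obtain a where a: "a \<in> S" using clS cl_def by auto
    have an: "a < n" using a Sn by auto
    have "cl n k (rot n (n-a) ` S)" using cl_rot[OF clS] .
    moreover have "0 \<in> rot n (n-a) ` S"
    proof -
      have "rot n (n-a) a = 0" using an by (simp add: rot_def)
      thus ?thesis using a by (metis imageI)
    qed
    ultimately have "\<exists>L\<in>F. rot n (n-a) ` S \<subseteq> L" by (rule cov)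
    then obtain L where L: "L \<in> F" "rot n (n-a) ` S \<subseteq> L" by blast
    have "(n - a + a) mod n = 0" using an by simp
    hence "rot n a ` rot n (n-a) ` S = S" by (rule rot_rot_img[OF Sn])
    hence sub: "S \<subseteq> rot n a ` L" using L(2) by blast
    have "rot n a ` L \<in> F" using F(2) L(1) by blast
    hence im: "ismax n k (rot n a ` L)" using F(1) by blast
    hence "cl n k (rot n a ` L)" unfolding ismax_def by blast
    hence "rot n a ` L = S" using S sub unfolding ismax_def by blast
    thus "S \<in> F" using \<open>rot n a ` L \<in> F\<close> by simp
  qed
qed

lemma sigma_img: "sigma n k i = (\<lambda>j. (i+j) mod n) ` {..k}"
  unfolding sigma_def by auto

lemma sigma_rot: "rot n t ` sigma n k i = sigma n k (i+t)"
  unfolding sigma_img rot_def image_image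
  by (rule image_cong) (auto simp: mod_add_left_eq mod_add_right_eq ac_simps)

lemma sigma'_rot: "rot n t ` sigma' n k i = sigma' n k (i+t)"
  unfolding sigma'_def rot_def by (simp add: mod_add_left_eq mod_add_right_eq ac_simps)

lemma sigma''_rot: "k \<ge> 1 \<Longrightarrow> rot n t ` sigma'' n k i = sigma'' n k (i+t)"
proof -
  assume k: "k \<ge> 1"
  have "((i + 2*k - 1) mod n + t) mod n = (i + t + 2*k - 1) mod n"
  proof -
    have "i + t + 2*k - 1 = (i + 2*k - 1) + t" using k by simp
    thus ?thesis by (simp add: mod_add_left_eq)
  qed
  moreover have "(i mod n + t) mod n = (i + t) mod n" "((i+k) mod n + t) mod n = (i + t + k) mod n"
     "((i+2*k) mod n + t) mod n = (i + t + 2*k) mod n"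
    by (simp_all add: mod_add_left_eq mod_add_right_eq ac_simps)
  ultimately show ?thesis unfolding sigma''_def rot_def by simp
qed

lemma sigma_mod: "sigma n k (i mod n) = sigma n k i"
  unfolding sigma_img by (rule image_cong) (auto simp: mod_add_left_eq)

lemma sigma'_mod: "sigma' n k (i mod n) = sigma' n k i"
  unfolding sigma'_def by (simp add: mod_add_left_eq)

lemma sigma''_mod: "k \<ge> 1 \<Longrightarrow> sigma'' n k (i mod n) = sigma'' n k i"
proof -
  assume k: "k \<ge> 1"
  have e: "i mod n + 2*k - 1 = i mod n + (2*k-1)" "i + 2*k - 1 = i + (2*k-1)" using k by simp_all
  have "(i mod n + (2*k-1)) mod n = (i + (2*k-1)) mod n" by (rule mod_add_left_eq)
  thus ?thesis unfolding sigma''_def e by (simp add: mod_add_left_eq)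
qed

lemma sigma0: "k < n \<Longrightarrow> sigma n k 0 = {..k}"
  unfolding sigma_img by auto



lemma sigma_mem: "j \<le> k \<Longrightarrow> (i+j) mod n \<in> sigma n k i"
  unfolding sigma_def by auto

lemma ismax_sigma0:
  assumes kn: "k < n" and big: "k = 0 \<or> 2*k+1 < n"
  shows "ismax n k (sigma n k 0)"
proof -
  have s0: "sigma n k 0 = {..k}" using sigma0 kn by simp
  have cl0: "cl n k {..k}"
  proof -
    have "cyc_dist n x y \<le> k" if "x \<le> k" "y \<le> k" for x y
      using that unfolding cd by (auto simp: min_def)
    thus ?thesis unfolding cl_def using kn by auto
  qed
  have "T \<subseteq> {..k}" if T: "cl n k T" "{..k} \<subseteq> T" for T
  proof
    fix y assume yT: "y \<in> T"
    show "y \<in> {..k}"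
    proof (rule ccontr)
      assume "y \<notin> {..k}"
      hence yk: "k < y" by simp
      have z: "0 \<in> T" using T by auto
      have yn: "y < n" using yT T cl_def by auto
      have ny: "n \<le> y + k" using cl_le2[OF T(1) z yT] yk by linarith
      show False
      proof (cases "k = 0")
        case True thus False using ny yn by simp
      next
        case False
        hence big2: "2*k+1 < n" using big by simp
        define j where "j = y + k + 1 - n"
        have jk: "j \<le> k" "j + n = y + k + 1" using j_def yn ny by auto
        hence "j \<in> T" using T by auto
        from cl_le2[OF T(1) this yT] show False using jk big2 yn by linarith
      qed
    qed
  qed
  hence "T = {..k}" if "cl n k T" "{..k} \<subseteq> T" for T using that by blast
  thus ?thesis unfolding ismax_def s0 using cl0 by blast
qed

lemma trapA: "n = 3*k \<Longrightarrow> 2 \<le> k \<Longrightarrow> (y::nat) < n \<Longrightarrow>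
 (y \<le> 0 + k \<and> 0 \<le> y + k) \<or> n + 0 \<le> y + k \<or> n + y \<le> 0 + k \<Longrightarrow>
 (y \<le> k + k \<and> k \<le> y + k) \<or> n + k \<le> y + k \<or> n + y \<le> k + k \<Longrightarrow>
 (y \<le> 2*k + k \<and> 2*k \<le> y + k) \<or> n + 2*k \<le> y + k \<or> n + y \<le> 2*k + k \<Longrightarrow>
 y = 0 \<or> y = k \<or> y = 2*k"
  by linarith

lemma trapB: "n + 1 = 3*k \<Longrightarrow> c + 1 = 2*k \<Longrightarrow> 3 \<le> k \<Longrightarrow> (y::nat) < n \<Longrightarrow>
 (y \<le> 0 + k \<and> 0 \<le> y + k) \<or> n + 0 \<le> y + k \<or> n + y \<le> 0 + k \<Longrightarrow>
 (y \<le> k + k \<and> k \<le> y + k) \<or> n + k \<le> y + k \<or> n + y \<le> k + k \<Longrightarrow>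
 (y \<le> c + k \<and> c \<le> y + k) \<or> n + c \<le> y + k \<or> n + y \<le> c + k \<Longrightarrow>
 (y \<le> 2*k + k \<and> 2*k \<le> y + k) \<or> n + 2*k \<le> y + k \<or> n + y \<le> 2*k + k \<Longrightarrow>
 y = 0 \<or> y = k \<or> y = c \<or> y = 2*k"
  by linarith

lemma ismax_sigma'0:
  assumes "n = 3*k" "k \<ge> 2"
  shows "ismax n k (sigma' n k 0)"
proof -
  have s0: "sigma' n k 0 = {0, k, 2*k}" unfolding sigma'_def using assms by simp
  have cl0: "cl n k {0,k,2*k}" unfolding cl_def using assms by (simp add: cd)
  have "T = {0,k,2*k}" if T: "cl n k T" "{0,k,2*k} \<subseteq> T" for T
  proof -
    have "y \<in> {0,k,2*k}" if y: "y \<in> T" for y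
    proof -
      have yn: "y < n" using y T cl_def by auto
      have m: "0 \<in> T" "k \<in> T" "2*k \<in> T" using T by auto
      have "y = 0 \<or> y = k \<or> y = 2*k"
        by (rule trapA[OF assms yn cl_le2[OF T(1) m(1) y] cl_le2[OF T(1) m(2) y] cl_le2[OF T(1) m(3) y]])
      thus ?thesis by auto
    qed
    hence "T \<subseteq> {0,k,2*k}" by blast
    thus ?thesis using T(2) by (rule subset_antisym)
  qed
  thus ?thesis unfolding ismax_def s0 using cl0 by blast
qed

lemma ismax_sigma''0:
  assumes "n = 3*k - 1" "k \<ge> 3"
  shows "ismax n k (sigma'' n k 0)"
proof -
  define c where "c = 2*k - 1"
  have nc: "n + 1 = 3*k" "c + 1 = 2*k" using assms c_def by auto
  have s0: "sigma'' n k 0 = {0, k, c, 2*k}" unfolding sigma''_def c_def using assms by simp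
  have lt: "0<n" "k<n" "c<n" "2*k<n" using nc assms(2) by linarith+
  have "\<forall>x\<in>{0, k, c, 2*k}. \<forall>y\<in>{0, k, c, 2*k}. cyc_dist n x y \<le> k"
    apply (simp only: ball_simps)
    apply (intro conjI dist_le_intro lt TrueI)
    using nc assms(2) by linarith+
  hence cl0: "cl n k {0, k, c, 2*k}" unfolding cl_def using lt by simp
  have "T = {0, k, c, 2*k}" if T: "cl n k T" "{0, k, c, 2*k} \<subseteq> T" for T
  proof -
    have "y \<in> {0, k, c, 2*k}" if y: "y \<in> T" for y
    proof -
      have yn: "y < n" using y T cl_def by auto
      have m: "0 \<in> T" "k \<in> T" "c \<in> T" "2*k \<in> T" using T by auto
      have "y = 0 \<or> y = k \<or> y = c \<or> y = 2*k"
        by (rule trapB[OF nc assms(2) yn cl_le2[OF T(1) m(1) y] cl_le2[OF T(1) m(2) y] cl_le2[OF T(1) m(3) y] cl_le2[OF T(1) m(4) y]])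
      thus ?thesis by auto
    qed
    hence "T \<subseteq> {0, k, c, 2*k}" by blast
    thus ?thesis using T(2) by (rule subset_antisym)
  qed
  thus ?thesis unfolding ismax_def s0 using cl0 by blast
qed

lemma cover_core:
  assumes cS: "cl n k S" and z: "0 \<in> S" and kn: "k < n"
  shows "(\<exists>i. S \<subseteq> sigma n k i) \<or> (\<exists>x m. x\<in>S \<and> m\<in>S \<and> x \<le> k \<and> k < m \<and> m \<le> x + k \<and> m + k < x + n \<and> n \<le> m + k \<and> (\<forall>y\<in>S. k<y \<longrightarrow> m \<le> y))"
proof -
  have Sn: "S \<subseteq> {..<n}" using cS cl_def by auto
  hence fin: "finite S" using finite_subset by blast
  have lh: "y \<le> k \<or> n \<le> y + k" if "y \<in> S" for y
    using cl_le2[OF cS z that] by linarith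
  define H where "H = {y\<in>S. k < y}"
  show ?thesis
  proof (cases "H = {}")
    case True
    hence "S \<subseteq> {..k}" using H_def by (auto simp: not_less)
    thus ?thesis using sigma0[OF kn] by auto
  next
    case False
    define m where "m = Min H"
    have finH: "finite H" using fin H_def by simp
    have mH: "m \<in> H" using Min_in[OF finH False] m_def by simp
    have mmin: "\<forall>y\<in>S. k<y \<longrightarrow> m \<le> y" using Min_le[OF finH] m_def H_def by auto
    have mS: "m \<in> S" "k < m" using mH H_def by auto
    have mn: "m < n" using mS Sn by auto
    have nm: "n \<le> m + k" using lh[OF mS(1)] mS by linarith
    show ?thesis
    proof (cases "\<forall>x\<in>S. x \<le> k \<longrightarrow> x + n \<le> m + k")
      case True
      have "S \<subseteq> sigma n k m"
      proof
        fix y assume y: "y \<in> S"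
        have yn: "y < n" using y Sn by auto
        show "y \<in> sigma n k m"
        proof (cases "k < y")
          case True
          hence my: "m \<le> y" using mmin y by auto
          hence e: "m + (y - m) = y" by simp
          have "y - m \<le> k" using yn nm my by linarith
          moreover have "(m + (y - m)) mod n = y" using e yn by simp
          ultimately show ?thesis using sigma_mem by metis
        next
          case False
          hence h: "y + n \<le> m + k" using True y by auto
          have e: "m + (y + n - m) = y + n" using mn by simp
          have "y + n - m \<le> k" using h by linarith
          moreover have "(m + (y + n - m)) mod n = y" using e yn by simp
          ultimately show ?thesis using sigma_mem by metis
        qed
      qed
      thus ?thesis by blast
    next
      case False
      then obtain x where x: "x \<in> S" "x \<le> k" "\<not> x + n \<le> m + k" by auto
      have "m \<le> x + k" using cl_le2[OF cS x(1) mS(1)] x mS mn kn by linarith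
      moreover have "m + k < x + n" using x(3) by linarith
      ultimately show ?thesis using x mS mmin nm by blast
    qed
  qed
qed

lemma modeq: "a = b + n \<Longrightarrow> b < n \<Longrightarrow> a mod n = (b::nat)"
  by simp

lemma cover1:
  assumes "n > 3*k" "cl n k S" "0 \<in> S"
  shows "\<exists>L\<in>range (sigma n k). S \<subseteq> L"
proof -
  have kn: "k < n" using assms(1) by simp
  have "\<not> (x \<le> k \<and> k < m \<and> m \<le> x + k \<and> n \<le> m + k)" for x m using assms(1) by linarith
  hence "\<exists>i. S \<subseteq> sigma n k i" using cover_core[OF assms(2,3) kn] by blast
  thus ?thesis by blast
qed

lemma cover2:
  assumes "n = 3*k" "k \<ge> 2" "cl n k S" "0 \<in> S"
  shows "\<exists>L\<in>range (sigma n k) \<union> range (sigma' n k). S \<subseteq> L"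
proof -
  have kn: "k < n" using assms by simp
  have Sn: "S \<subseteq> {..<n}" using assms cl_def by auto
  from cover_core[OF assms(3,4) kn] show ?thesis
  proof
    assume "\<exists>i. S \<subseteq> sigma n k i" thus ?thesis by blast
  next
    assume "\<exists>x m. x\<in>S \<and> m\<in>S \<and> x \<le> k \<and> k < m \<and> m \<le> x + k \<and> m + k < x + n \<and> n \<le> m + k \<and> (\<forall>y\<in>S. k<y \<longrightarrow> m \<le> y)"
    then obtain x m where xm: "x\<in>S" "m\<in>S" "x \<le> k" "k < m" "m \<le> x + k" "n \<le> m + k" by blast
    have "x = k \<and> m = 2*k" using xm(3-6) assms(1) by linarith
    hence kS: "k \<in> S" "2*k \<in> S" using xm by auto
    have "S \<subseteq> {0, k, 2*k}"
    proof
      fix y assume y: "y \<in> S"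
      have yn: "y < n" using y Sn by auto
      have "y = 0 \<or> y = k \<or> y = 2*k"
        by (rule trapA[OF assms(1,2) yn cl_le2[OF assms(3) assms(4) y] cl_le2[OF assms(3) kS(1) y] cl_le2[OF assms(3) kS(2) y]])
      thus "y \<in> {0, k, 2*k}" by auto
    qed
    moreover have "sigma' n k 0 = {0, k, 2*k}" unfolding sigma'_def using assms by simp
    ultimately show ?thesis by (metis UnI2 rangeI)
  qed
qed

lemma trapC1: "n + 1 = 3*k \<Longrightarrow> c + 1 = 2*k \<Longrightarrow> e + 1 = k \<Longrightarrow> 3 \<le> k \<Longrightarrow> (y::nat) < n \<Longrightarrow>
 (y \<le> 0 + k \<and> 0 \<le> y + k) \<or> n + 0 \<le> y + k \<or> n + y \<le> 0 + k \<Longrightarrow>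
 (y \<le> k + k \<and> k \<le> y + k) \<or> n + k \<le> y + k \<or> n + y \<le> k + k \<Longrightarrow>
 (y \<le> c + k \<and> c \<le> y + k) \<or> n + c \<le> y + k \<or> n + y \<le> c + k \<Longrightarrow>
 y = 0 \<or> y = e \<or> y = k \<or> y = c \<or> y = 2*k"
  by linarith

lemma trapC2: "n + 1 = 3*k \<Longrightarrow> c + 1 = 2*k \<Longrightarrow> 3 \<le> k \<Longrightarrow> (y::nat) < n \<Longrightarrow>
 (y \<le> 0 + k \<and> 0 \<le> y + k) \<or> n + 0 \<le> y + k \<or> n + y \<le> 0 + k \<Longrightarrow>
 (y \<le> k + k \<and> k \<le> y + k) \<or> n + k \<le> y + k \<or> n + y \<le> k + k \<Longrightarrow>
 (y \<le> 2*k + k \<and> 2*k \<le> y + k) \<or> n + 2*k \<le> y + k \<or> n + y \<le> 2*k + k \<Longrightarrow>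
 y = 0 \<or> y = 1 \<or> y = k \<or> y = c \<or> y = 2*k"
  by linarith

lemma trapC3: "n + 1 = 3*k \<Longrightarrow> c + 1 = 2*k \<Longrightarrow> e + 1 = k \<Longrightarrow> f + 2 = 3*k \<Longrightarrow> 3 \<le> k \<Longrightarrow> (y::nat) < n \<Longrightarrow>
 (y \<le> 0 + k \<and> 0 \<le> y + k) \<or> n + 0 \<le> y + k \<or> n + y \<le> 0 + k \<Longrightarrow>
 (y \<le> e + k \<and> e \<le> y + k) \<or> n + e \<le> y + k \<or> n + y \<le> e + k \<Longrightarrow>
 (y \<le> c + k \<and> c \<le> y + k) \<or> n + c \<le> y + k \<or> n + y \<le> c + k \<Longrightarrow>
 y = 0 \<or> y = e \<or> y = k \<or> y = c \<or> y = f"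
  by linarith

lemma cover3:
  assumes "n = 3*k - 1" "k \<ge> 3" "cl n k S" "0 \<in> S"
  shows "\<exists>L\<in>range (sigma n k) \<union> range (sigma'' n k). S \<subseteq> L"
proof -
  define c where "c = 2*k - 1"
  define e where "e = k - 1"
  define f where "f = 3*k - 2"
  have nc: "n + 1 = 3*k" "c + 1 = 2*k" "e + 1 = k" "f + 2 = 3*k" using assms c_def e_def f_def by auto
  have k3: "3 \<le> k" using assms by simp
  have kn: "k < n" using assms by simp
  have Sn: "S \<subseteq> {..<n}" using assms cl_def by auto
  have s0: "sigma'' n k 0 = {0,k,c,2*k}" unfolding sigma''_def c_def using assms by simp
  have sk: "sigma'' n k k = {0,1,k,2*k}"
  proof -
    have "(k + 2*k - 1) mod n = 0" "(k + 2*k) mod n = 1" "(k+k) mod n = 2*k" "k mod n = k"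
      using assms by (auto intro: modeq)
    thus ?thesis unfolding sigma''_def by auto
  qed
  have skm: "sigma'' n k e = {0,e,c,f}"
  proof -
    have "(e + 2*k - 1) mod n = f" "(e + 2*k) mod n = 0" "(e+k) mod n = c" "e mod n = e"
      using assms nc by (auto intro: modeq)
    thus ?thesis unfolding sigma''_def by auto
  qed
  have s2k: "sigma'' n k c = {0,e,k,c}"
  proof -
    have "(c + 2*k - 1) mod n = e" "(c + 2*k) mod n = k" "(c+k) mod n = 0" "c mod n = c"
      using assms nc by (auto intro: modeq)
    thus ?thesis unfolding sigma''_def by auto
  qed
  note cl = cl_le2[OF assms(3)]
  from cover_core[OF assms(3,4) kn] show ?thesis
  proof
    assume "\<exists>i. S \<subseteq> sigma n k i" thus ?thesis by blast
  next
    assume "\<exists>x m. x\<in>S \<and> m\<in>S \<and> x \<le> k \<and> k < m \<and> m \<le> x + k \<and> m + k < x + n \<and> n \<le> m + k \<and> (\<forall>y\<in>S. k<y \<longrightarrow> m \<le> y)"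
    then obtain x m where xm: "x\<in>S" "m\<in>S" "x \<le> k" "k < m" "m \<le> x + k" "m + k < x + n" "n \<le> m + k"
      and mmin: "\<forall>y\<in>S. k<y \<longrightarrow> m \<le> y" by blast
    have "(x = k \<and> m = c) \<or> (x = k \<and> m = 2*k) \<or> (x = e \<and> m = c)" using xm(3-7) nc by linarith
    moreover
    { assume c1: "x = k" "m = c"
      hence kS: "k \<in> S" "c \<in> S" using xm by auto
      have Y: "y = 0 \<or> y = e \<or> y = k \<or> y = c \<or> y = 2*k" if y: "y \<in> S" for y
      proof -
        have "y < n" using y Sn by auto
        from trapC1[OF nc(1-3) k3 this cl[OF assms(4) y] cl[OF kS(1) y] cl[OF kS(2) y]] show ?thesis .
      qed
      have ?thesis
      proof (cases "e \<in> S")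
        case True
        have "S \<subseteq> {0,e,k,c}"
        proof
          fix y assume y: "y \<in> S"
          have "y \<noteq> 2*k"
          proof
            assume "y = 2*k"
            from cl[OF True y] show False using \<open>y = 2*k\<close> nc k3 by linarith
          qed
          thus "y \<in> {0,e,k,c}" using Y[OF y] by auto
        qed
        thus ?thesis using s2k by (metis UnI2 rangeI)
      next
        case False
        have "S \<subseteq> {0,k,c,2*k}" using Y False by auto
        thus ?thesis using s0 by (metis UnI2 rangeI)
      qed }
    moreover
    { assume c2: "x = k" "m = 2*k"
      hence kS: "k \<in> S" "2*k \<in> S" using xm by auto
      have "S \<subseteq> {0,1,k,2*k}"
      proof
        fix y assume y: "y \<in> S"
        have "y < n" using y Sn by auto
        from trapC2[OF nc(1,2) k3 this cl[OF assms(4) y] cl[OF kS(1) y] cl[OF kS(2) y]]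
        have "y = 0 \<or> y = 1 \<or> y = k \<or> y = c \<or> y = 2*k" .
        moreover have "k < c" "c < m" using c2 nc k3 by linarith+
        hence "y \<noteq> c" using mmin y by auto
        ultimately show "y \<in> {0,1,k,2*k}" by auto
      qed
      hence ?thesis using sk by (metis UnI2 rangeI) }
    moreover
    { assume c3: "x = e" "m = c"
      hence kS: "e \<in> S" "c \<in> S" using xm by auto
      have Y: "y = 0 \<or> y = e \<or> y = k \<or> y = c \<or> y = f" if y: "y \<in> S" for y
      proof -
        have "y < n" using y Sn by auto
        from trapC3[OF nc k3 this cl[OF assms(4) y] cl[OF kS(1) y] cl[OF kS(2) y]] show ?thesis .
      qed
      have ?thesis
      proof (cases "k \<in> S")
        case True
        have "S \<subseteq> {0,e,k,c}"
        proof
          fix y assume y: "y \<in> S"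
          have "y \<noteq> f"
          proof
            assume "y = f"
            from cl[OF True y] show False using \<open>y = f\<close> nc k3 by linarith
          qed
          thus "y \<in> {0,e,k,c}" using Y[OF y] by auto
        qed
        thus ?thesis using s2k by (metis UnI2 rangeI)
      next
        case False
        have "S \<subseteq> {0,e,c,f}" using Y False by auto
        thus ?thesis using skm by (metis UnI2 rangeI)
      qed }
    ultimately show ?thesis by blast
  qed
qed

lemma range_lt: "(\<And>i::nat. f (i mod n) = f i) \<Longrightarrow> n > 0 \<Longrightarrow> {f i | i. i < n} = range f"
proof -
  assume h: "\<And>i. f (i mod n) = f i" "n > 0"
  have "f i \<in> {f i | i. i < n}" for i
  proof -
    have "f i = f (i mod n)" "i mod n < n" using h by auto
    thus ?thesis by blast
  qed
  thus ?thesis by auto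
qed

lemma fam_sigma: assumes "k < n" "k = 0 \<or> 2*k+1 < n" "L \<in> range (sigma n k)" shows "ismax n k L"
proof -
  obtain i where i: "L = sigma n k i" using assms(3) by blast
  have "sigma n k i = rot n i ` sigma n k 0" using sigma_rot[of n i k 0] by simp
  thus ?thesis using i ismax_rot[OF ismax_sigma0[OF assms(1,2)]] by simp
qed

lemma fam_sigma': assumes "n = 3*k" "k \<ge> 2" "L \<in> range (sigma' n k)" shows "ismax n k L"
proof -
  obtain i where i: "L = sigma' n k i" using assms(3) by blast
  have "sigma' n k i = rot n i ` sigma' n k 0" using sigma'_rot[of n i k 0] by simp
  thus ?thesis using i ismax_rot[OF ismax_sigma'0[OF assms(1,2)]] by simp
qed

lemma fam_sigma'': assumes "n = 3*k - 1" "k \<ge> 3" "L \<in> range (sigma'' n k)" shows "ismax n k L"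
proof -
  obtain i where i: "L = sigma'' n k i" using assms(3) by blast
  have "k \<ge> 1" using assms by simp
  hence "sigma'' n k i = rot n i ` sigma'' n k 0" using sigma''_rot[of k n i 0] by simp
  thus ?thesis using i ismax_rot[OF ismax_sigma''0[OF assms(1,2)]] by simp
qed

lemma clos_sigma: "L \<in> range (sigma n k) \<Longrightarrow> rot n t ` L \<in> range (sigma n k)"
proof -
  assume "L \<in> range (sigma n k)"
  then obtain i where "L = sigma n k i" by blast
  thus ?thesis using sigma_rot[of n t k i] by simp
qed

lemma clos_sigma': "L \<in> range (sigma' n k) \<Longrightarrow> rot n t ` L \<in> range (sigma' n k)"
proof -
  assume "L \<in> range (sigma' n k)"
  then obtain i where "L = sigma' n k i" by blast
  thus ?thesis using sigma'_rot[of n t k i] by simp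
qed

lemma clos_sigma'': "k \<ge> 1 \<Longrightarrow> L \<in> range (sigma'' n k) \<Longrightarrow> rot n t ` L \<in> range (sigma'' n k)"
proof -
  assume k: "k \<ge> 1" and "L \<in> range (sigma'' n k)"
  then obtain i where "L = sigma'' n k i" by blast
  thus ?thesis using sigma''_rot[OF k, of n t i] by simp
qed

lemma case1: assumes "n > 3*k" shows "{L. ismax n k L} = range (sigma n k)"
proof (rule assemble)
  have "k < n" using assms by simp
  moreover have "k = 0 \<or> 2*k+1 < n" using assms by linarith
  ultimately show "\<forall>L\<in>range (sigma n k). ismax n k L" using fam_sigma by blast
  show "\<forall>L\<in>range (sigma n k). \<forall>t. rot n t ` L \<in> range (sigma n k)" using clos_sigma by blast
  show "\<And>S. cl n k S \<Longrightarrow> 0 \<in> S \<Longrightarrow> \<exists>L\<in>range (sigma n k). S \<subseteq> L" using cover1[OF assms] by blast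
qed
lemma case2: assumes "n = 3*k" "k \<ge> 2" shows "{L. ismax n k L} = range (sigma n k) \<union> range (sigma' n k)"
proof (rule assemble)
  have "k < n" using assms by simp
  moreover have "k = 0 \<or> 2*k+1 < n" using assms by linarith
  ultimately have "\<forall>L\<in>range (sigma n k). ismax n k L" using fam_sigma by blast
  moreover have "\<forall>L\<in>range (sigma' n k). ismax n k L" using fam_sigma'[OF assms] by blast
  ultimately show "\<forall>L\<in>range (sigma n k) \<union> range (sigma' n k). ismax n k L" by blast
  show "\<forall>L\<in>range (sigma n k) \<union> range (sigma' n k). \<forall>t. rot n t ` L \<in> range (sigma n k) \<union> range (sigma' n k)"
  proof (intro ballI allI)
    fix L t assume "L \<in> range (sigma n k) \<union> range (sigma' n k)"
    thus "rot n t ` L \<in> range (sigma n k) \<union> range (sigma' n k)"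
    proof
      assume "L \<in> range (sigma n k)" thus ?thesis using clos_sigma[of L n k t] by (rule_tac UnI1) 
    next
      assume "L \<in> range (sigma' n k)" thus ?thesis using clos_sigma'[of L n k t] by (rule_tac UnI2)
    qed
  qed
  show "\<And>S. cl n k S \<Longrightarrow> 0 \<in> S \<Longrightarrow> \<exists>L\<in>range (sigma n k) \<union> range (sigma' n k). S \<subseteq> L"
    by (rule cover2[OF assms])
qed
lemma case3: assumes "n = 3*k - 1" "k \<ge> 3" shows "{L. ismax n k L} = range (sigma n k) \<union> range (sigma'' n k)"
proof (rule assemble)
  have k1: "k \<ge> 1" using assms by simp
  have "k < n" using assms by simp
  moreover have "k = 0 \<or> 2*k+1 < n" using assms by linarith
  ultimately have "\<forall>L\<in>range (sigma n k). ismax n k L" using fam_sigma by blast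
  moreover have "\<forall>L\<in>range (sigma'' n k). ismax n k L" using fam_sigma''[OF assms] by blast
  ultimately show "\<forall>L\<in>range (sigma n k) \<union> range (sigma'' n k). ismax n k L" by blast
  show "\<forall>L\<in>range (sigma n k) \<union> range (sigma'' n k). \<forall>t. rot n t ` L \<in> range (sigma n k) \<union> range (sigma'' n k)"
  proof (intro ballI allI)
    fix L t assume "L \<in> range (sigma n k) \<union> range (sigma'' n k)"
    thus "rot n t ` L \<in> range (sigma n k) \<union> range (sigma'' n k)"
    proof
      assume "L \<in> range (sigma n k)" thus ?thesis using clos_sigma[of L n k t] by (rule_tac UnI1) 
    next
      assume "L \<in> range (sigma'' n k)" thus ?thesis using clos_sigma''[OF k1, of L n t] by (rule_tac UnI2)
    qed
  qed
  show "\<And>S. cl n k S \<Longrightarrow> 0 \<in> S \<Longrightarrow> \<exists>L\<in>range (sigma n k) \<union> range (sigma'' n k). S \<subseteq> L"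
    by (rule cover3[OF assms])
qed
theorem lemmaA1:
  fixes n k :: nat
  assumes "n \<ge> 1"
  shows "(n > 3 * k \<longrightarrow>
           maximal_simplices (VR (cyc_vertices n) (cyc_dist n) k) = {sigma n k i | i. i < n})
       \<and> (n = 3 * k \<and> k \<ge> 2 \<longrightarrow>
           maximal_simplices (VR (cyc_vertices n) (cyc_dist n) k) =
             {sigma n k i | i. i < n} \<union> {sigma' n k i | i. i < n})
       \<and> (n = 3 * k - 1 \<and> k \<ge> 3 \<longrightarrow>
           maximal_simplices (VR (cyc_vertices n) (cyc_dist n) k) =
             {sigma n k i | i. i < n} \<union> {sigma'' n k i | i. i < n})"
proof -
  have n0: "n > 0" using assms by simp
  have rs: "{sigma n k i | i. i < n} = range (sigma n k)" using range_lt[of "sigma n k" n, OF sigma_mod n0] .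
  have rs': "{sigma' n k i | i. i < n} = range (sigma' n k)" using range_lt[of "sigma' n k" n, OF sigma'_mod n0] .
  have A: "n > 3 * k \<longrightarrow> maximal_simplices (VR (cyc_vertices n) (cyc_dist n) k) = {sigma n k i | i. i < n}"
  proof
    assume "n > 3 * k"
    thus "maximal_simplices (VR (cyc_vertices n) (cyc_dist n) k) = {sigma n k i | i. i < n}"
      unfolding maxsimp rs by (rule case1)
  qed
  have B: "n = 3 * k \<and> k \<ge> 2 \<longrightarrow> maximal_simplices (VR (cyc_vertices n) (cyc_dist n) k) =
             {sigma n k i | i. i < n} \<union> {sigma' n k i | i. i < n}"
  proof
    assume h: "n = 3 * k \<and> k \<ge> 2"
    show "maximal_simplices (VR (cyc_vertices n) (cyc_dist n) k) =
             {sigma n k i | i. i < n} \<union> {sigma' n k i | i. i < n}"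
      unfolding maxsimp rs rs' using h case2 by blast
  qed
  have C: "n = 3 * k - 1 \<and> k \<ge> 3 \<longrightarrow> maximal_simplices (VR (cyc_vertices n) (cyc_dist n) k) =
             {sigma n k i | i. i < n} \<union> {sigma'' n k i | i. i < n}"
  proof
    assume h: "n = 3 * k - 1 \<and> k \<ge> 3"
    hence k1: "k \<ge> 1" by simp
    have rs'': "{sigma'' n k i | i. i < n} = range (sigma'' n k)" using range_lt[of "sigma'' n k" n, OF sigma''_mod[OF k1] n0] .
    show "maximal_simplices (VR (cyc_vertices n) (cyc_dist n) k) =
             {sigma n k i | i. i < n} \<union> {sigma'' n k i | i. i < n}"
      unfolding maxsimp rs rs'' using h case3 by blast
  qed
  show ?thesis using A B C by blast
qed

end
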